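(* Let $n\ge 2$, let $V\in\mathbb{R}^{n\times(n-1)}$ be such that $\big[V\ \ \tfrac1{\sqrt n}e\big]$ is orthogonal, and let $v_\ell\in\mathbb{R}^{1\times(n-1)}$ denote the $\ell$-th row of $V$. Let $D_0\in\mathcal{E}^n$, indices $1\le i<j\le n$, $\alpha\in\mathbb{R}$, and suppose $D_n:=D_0+\alpha E_{ij}\notin\mathcal{E}^n$. Let $\bar X$ be the unique minimizer of $\min_{X\in\mathcal{S}^{n-1},\,X\succeq0}\frac12\|\mathcal{K}_V(X)-D_n\|_F^2$, and let $X_0:=\mathcal{K}_V^\dagger(D_0)$. Put $$Y:=\mathcal{K}_V^*(E_{ij})=2\,(v_i-v_j)^T(v_i-v_j).$$ Then $\alpha\neq0$, $0\neq Y\succeq0$, and the following are equivalent: (a) $D_0=\mathcal{K}_V(\bar X)$ (i.e. $D_0$ is the nearest EDM to $D_n$); (b) $X_0\in\mathcal{S}^{n-1}_+\cap Y^\perp$ (equivalently $\operatorname{trace}(X_0Y)=0$) and $\alpha<0$; (c) $(D_0)_{ij}=0$ and $\alpha<0$.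
   Context: $\mathcal{E}^n$ is the closed convex cone of $n\times n$ Euclidean distance matrices (squared distances). $E_{ij}=e_ie_j^T+e_je_i^T$ with $e_i$ the standard unit vectors; $e$ is the all-ones vector. $\mathcal{K}(G)=\operatorname{diag}(G)e^T+e\operatorname{diag}(G)^T-2G$ (Lindenstrauss operator), $\mathcal{K}^*(D)=2(\operatorname{Diag}(De)-D)$ its adjoint, $\mathcal{K}_V(X)=\mathcal{K}(VXV^T)$ for $X\in\mathcal{S}^{n-1}$, $\mathcal{K}_V^*(D)=V^T\mathcal{K}^*(D)V$, and $\mathcal{K}_V^\dagger$ is the Moore–Penrose pseudoinverse of $\mathcal{K}_V$. $\mathcal{S}^{n-1}_+$ is the cone of positive semidefinite matrices in $\mathcal{S}^{n-1}$ and $Y^\perp=\{X:\operatorname{trace}(XY)=0\}$. *)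

theory Defs
  imports "Jordan_Normal_Form.Matrix"
begin

text \<open>Matrices are Jordan_Normal_Form matrices with explicit dimensions; indices are 0-based.\<close>

definition symm_mat :: "nat \<Rightarrow> real mat \<Rightarrow> bool" where
  "symm_mat k A \<longleftrightarrow> A \<in> carrier_mat k k \<and> transpose_mat A = A"

definition psd_mat :: "nat \<Rightarrow> real mat \<Rightarrow> bool" where
  "psd_mat k A \<longleftrightarrow> symm_mat k A \<and> (\<forall>x \<in> carrier_vec k. 0 \<le> x \<bullet> (A *\<^sub>v x))"

definition EDM :: "nat \<Rightarrow> real mat \<Rightarrow> bool" where
  "EDM n D \<longleftrightarrow> D \<in> carrier_mat n n \<and>
     (\<exists>(k::nat) (p::nat \<Rightarrow> nat \<Rightarrow> real). \<forall>a<n. \<forall>b<n. D $$ (a,b) = (\<Sum>l<k. (p a l - p b l)^2))"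

definition Emat :: "nat \<Rightarrow> nat \<Rightarrow> nat \<Rightarrow> real mat" where
  "Emat n i j = mat n n (\<lambda>(a,b). (if a = i \<and> b = j then 1 else 0) + (if a = j \<and> b = i then 1 else 0))"

text \<open>Lindenstrauss operator K(G) = diag(G)e^T + e diag(G)^T - 2G.\<close>
definition lindK :: "nat \<Rightarrow> real mat \<Rightarrow> real mat" where
  "lindK n G = mat n n (\<lambda>(a,b). G $$ (a,a) + G $$ (b,b) - 2 * G $$ (a,b))"

text \<open>Adjoint K^*(D) = 2 (Diag(De) - D).\<close>
definition lindK_adj :: "nat \<Rightarrow> real mat \<Rightarrow> real mat" where
  "lindK_adj n D = mat n n (\<lambda>(a,b). 2 * ((if a = b then (\<Sum>c<n. D $$ (a,c)) else 0) - D $$ (a,b)))"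

definition KV :: "real mat \<Rightarrow> real mat \<Rightarrow> real mat" where
  "KV V X = lindK (dim_row V) (V * X * transpose_mat V)"

definition KV_adj :: "real mat \<Rightarrow> real mat \<Rightarrow> real mat" where
  "KV_adj V D = transpose_mat V * lindK_adj (dim_row V) D * V"

definition mtrace :: "real mat \<Rightarrow> real" where
  "mtrace A = (\<Sum>a<dim_row A. A $$ (a,a))"

definition fro_sq :: "real mat \<Rightarrow> real" where
  "fro_sq A = (\<Sum>a<dim_row A. \<Sum>b<dim_col A. (A $$ (a,b))^2)"

text \<open>Moore--Penrose pseudoinverse of K_V : S^{n-1} \<rightarrow> R^{n x n} (Frobenius inner products):
  the minimum-norm least-squares solution.\<close>
definition KV_pinv :: "real mat \<Rightarrow> real mat \<Rightarrow> real mat" where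
  "KV_pinv V D = (let m = dim_col V;
       LS = {X. symm_mat m X \<and> (\<forall>Z. symm_mat m Z \<longrightarrow> fro_sq (KV V X - D) \<le> fro_sq (KV V Z - D))}
     in THE X. X \<in> LS \<and> (\<forall>Z \<in> LS. fro_sq X \<le> fro_sq Z))"

end

theory Submission
  imports Defs "Jordan_Normal_Form.Determinant"
begin


lemma orth_facts:
  fixes V :: "real mat" and n :: nat
  assumes n2: "n \<ge> 2" and V: "V \<in> carrier_mat n (n - 1)"
    and orth: "transpose_mat (mat n n (\<lambda>(a,b). if b < n - 1 then V $$ (a,b) else 1 / sqrt (real n)))
                 * mat n n (\<lambda>(a,b). if b < n - 1 then V $$ (a,b) else 1 / sqrt (real n)) = 1\<^sub>m n"
  shows "\<And>k l. k < n - 1 \<Longrightarrow> l < n - 1 \<Longrightarrow> (\<Sum>a<n. V $$ (a,k) * V $$ (a,l)) = (if k = l then 1 else 0)"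
    and "\<And>k. k < n - 1 \<Longrightarrow> (\<Sum>a<n. V $$ (a,k)) = 0"
    and "\<And>a b. a < n \<Longrightarrow> b < n \<Longrightarrow> (\<Sum>k<n - 1. V $$ (a,k) * V $$ (b,k)) = (if a = b then 1 else 0) - 1 / real n"
proof -
  define Q where "Q = mat n n (\<lambda>(a,b). if b < n - 1 then V $$ (a,b) else 1 / sqrt (real n))"
  have QT: "transpose_mat Q * Q = 1\<^sub>m n" using orth Q_def by simp
  have Qc: "Q \<in> carrier_mat n n" unfolding Q_def by simp
  have QQT: "Q * transpose_mat Q = 1\<^sub>m n"
    by (rule mat_mult_left_right_inverse[OF _ Qc QT]) (use Qc in simp)
  have e1: "(\<Sum>a<n. Q $$ (a,k) * Q $$ (a,l)) = (if k = l then 1 else 0)" if "k < n" "l < n" for k l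
  proof -
    have "(transpose_mat Q * Q) $$ (k,l) = (if k = l then 1 else 0)" using QT that by simp
    moreover have "(transpose_mat Q * Q) $$ (k,l) = (\<Sum>a<n. Q $$ (a,k) * Q $$ (a,l))"
      using that Qc by (simp add: scalar_prod_def atLeast0LessThan)
    ultimately show ?thesis by simp
  qed
  have e2: "(\<Sum>c<n. Q $$ (a,c) * Q $$ (b,c)) = (if a = b then 1 else 0)" if "a < n" "b < n" for a b
  proof -
    have "(Q * transpose_mat Q) $$ (a,b) = (if a = b then 1 else 0)" using QQT that by simp
    moreover have "(Q * transpose_mat Q) $$ (a,b) = (\<Sum>c<n. Q $$ (a,c) * Q $$ (b,c))"
      using that Qc by (simp add: scalar_prod_def atLeast0LessThan)
    ultimately show ?thesis by simp
  qed
  have Qe: "Q $$ (a,b) = (if b < n - 1 then V $$ (a,b) else 1 / sqrt (real n))" if "a < n" "b < n" for a b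
    using that Q_def by simp
  have nS: "n = Suc (n - 1)" using n2 by simp
  show "(\<Sum>a<n. V $$ (a,k) * V $$ (a,l)) = (if k = l then 1 else 0)" if "k < n - 1" "l < n - 1" for k l
    using e1[of k l] that Qe by simp
  show "(\<Sum>a<n. V $$ (a,k)) = 0" if "k < n - 1" for k
  proof -
    have "(\<Sum>a<n. Q $$ (a,k) * Q $$ (a,n-1)) = 0" using e1[of k "n-1"] that n2 by simp
    moreover have "(\<Sum>a<n. Q $$ (a,k) * Q $$ (a,n-1)) = (\<Sum>a<n. V $$ (a,k)) * (1 / sqrt (real n))"
      using that Qe n2 by (simp add: sum_divide_distrib)
    ultimately show ?thesis using n2 by simp
  qed
  show "(\<Sum>k<n - 1. V $$ (a,k) * V $$ (b,k)) = (if a = b then 1 else 0) - 1 / real n" if "a < n" "b < n" for a b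
  proof -
    have "(\<Sum>c<n. Q $$ (a,c) * Q $$ (b,c)) = (\<Sum>c<n-1. Q $$ (a,c) * Q $$ (b,c)) + Q $$ (a,n-1) * Q $$ (b,n-1)"
      by (subst nS) simp
    also have "\<dots> = (\<Sum>k<n - 1. V $$ (a,k) * V $$ (b,k)) + 1 / real n"
      using that Qe n2 by (simp add: real_sqrt_mult[symmetric])
    finally show ?thesis using e2[OF that] by simp
  qed
qed



definition kvf :: "real mat \<Rightarrow> nat \<Rightarrow> (nat \<Rightarrow> nat \<Rightarrow> real) \<Rightarrow> nat \<Rightarrow> nat \<Rightarrow> real" where
  "kvf V m h a b = (\<Sum>k<m. \<Sum>l<m. (V$$(a,k) - V$$(b,k)) * h k l * (V$$(a,l) - V$$(b,l)))"

definition Gf :: "real mat \<Rightarrow> nat \<Rightarrow> (nat \<Rightarrow> nat \<Rightarrow> real) \<Rightarrow> nat \<Rightarrow> nat \<Rightarrow> real" where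
  "Gf V m h a b = (\<Sum>k<m. \<Sum>l<m. V$$(a,k) * h k l * V$$(b,l))"

lemma kvf_expand: "kvf V m h a b = Gf V m h a a + Gf V m h b b - Gf V m h a b - Gf V m h b a"
proof -
  have "kvf V m h a b = (\<Sum>k<m. \<Sum>l<m. (V$$(a,k) * h k l * V$$(a,l) + V$$(b,k) * h k l * V$$(b,l))
      - (V$$(a,k) * h k l * V$$(b,l) + V$$(b,k) * h k l * V$$(a,l)))"
    unfolding kvf_def by (intro sum.cong refl) (simp add: algebra_simps)
  also have "\<dots> = Gf V m h a a + Gf V m h b b - Gf V m h a b - Gf V m h b a"
    unfolding Gf_def by (simp add: sum_subtractf sum.distrib)
  finally show ?thesis .
qed

lemma Gf_sym: assumes "\<And>k l. k < m \<Longrightarrow> l < m \<Longrightarrow> h k l = h l k"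
  shows "Gf V m h b a = Gf V m h a b"
proof -
  have "Gf V m h b a = (\<Sum>l<m. \<Sum>k<m. V$$(b,k) * h k l * V$$(a,l))"
    unfolding Gf_def by (rule sum.swap)
  also have "\<dots> = Gf V m h a b" unfolding Gf_def
    by (intro sum.cong refl) (simp add: assms mult.commute mult.left_commute)
  finally show ?thesis .
qed

lemma kvf_sym_expand: assumes "\<And>k l. k < m \<Longrightarrow> l < m \<Longrightarrow> h k l = h l k"
  shows "kvf V m h a b = Gf V m h a a + Gf V m h b b - 2 * Gf V m h a b"
  using kvf_expand[of V m h a b] Gf_sym[where V=V and a=a and b=b, OF assms] by simp

lemma VXVt_entry:
  assumes V: "V \<in> carrier_mat n m" and X: "X \<in> carrier_mat m m" and ab: "a < n" "b < n"
  shows "(V * X * transpose_mat V) $$ (a,b) = Gf V m (\<lambda>k l. X $$ (k,l)) a b"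
proof -
  have "(V * X * transpose_mat V) $$ (a,b) = (\<Sum>i<m. V $$ (a, i) * (\<Sum>ia<m. X $$ (i, ia) * V $$ (b, ia)))"
    using V X ab by (simp add: scalar_prod_def atLeast0LessThan)
  also have "\<dots> = Gf V m (\<lambda>k l. X $$ (k,l)) a b" unfolding Gf_def
    by (simp add: sum_distrib_left mult.assoc)
  finally show ?thesis .
qed

lemma KV_entry:
  assumes V: "V \<in> carrier_mat n m" and X: "X \<in> carrier_mat m m" and ab: "a < n" "b < n"
    and sym: "\<And>k l. k < m \<Longrightarrow> l < m \<Longrightarrow> X $$ (k,l) = X $$ (l,k)"
  shows "KV V X $$ (a,b) = kvf V m (\<lambda>k l. X $$ (k,l)) a b"
proof -
  have "KV V X $$ (a,b) = Gf V m (\<lambda>k l. X $$ (k,l)) a a + Gf V m (\<lambda>k l. X $$ (k,l)) b b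
        - 2 * Gf V m (\<lambda>k l. X $$ (k,l)) a b"
    unfolding KV_def lindK_def using V ab VXVt_entry[OF V X] by simp
  then show ?thesis using kvf_sym_expand[of m "\<lambda>k l. X $$ (k,l)" V a b] sym by simp
qed

lemma kvf_swap: "kvf V m h b a = kvf V m h a b"
  unfolding kvf_def by (intro sum.cong refl) (simp add: algebra_simps)

lemma kvf_lin: "kvf V m (\<lambda>k l. h k l + t * g k l) a b = kvf V m h a b + t * kvf V m g a b"
proof -
  have "kvf V m (\<lambda>k l. h k l + t * g k l) a b = (\<Sum>k<m. \<Sum>l<m. (V$$(a,k) - V$$(b,k)) * h k l * (V$$(a,l) - V$$(b,l))
     + t * ((V$$(a,k) - V$$(b,k)) * g k l * (V$$(a,l) - V$$(b,l))))"
    unfolding kvf_def by (intro sum.cong refl) (simp add: algebra_simps)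
  then show ?thesis unfolding kvf_def by (simp add: sum.distrib sum_distrib_left)
qed

lemma kvf_cong: "(\<And>k l. k < m \<Longrightarrow> l < m \<Longrightarrow> h k l = g k l) \<Longrightarrow> kvf V m h a b = kvf V m g a b"
  unfolding kvf_def by simp

lemma kvf_quad:
  assumes X: "X \<in> carrier_mat m m"
  shows "kvf V m (\<lambda>k l. X $$ (k,l)) a b = (vec m (\<lambda>k. V$$(a,k) - V$$(b,k))) \<bullet> (X *\<^sub>v vec m (\<lambda>k. V$$(a,k) - V$$(b,k)))"
  using X by (simp add: kvf_def scalar_prod_def atLeast0LessThan sum_distrib_left algebra_simps)

lemma kvf_psd:
  assumes "psd_mat m X" shows "kvf V m (\<lambda>k l. X $$ (k,l)) a b \<ge> 0"
  using assms kvf_quad[of X m V a b] unfolding psd_mat_def symm_mat_def by auto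



lemma rank_quad:
  fixes w :: "nat \<Rightarrow> real" and u :: "nat \<Rightarrow> nat \<Rightarrow> real"
  shows "(\<Sum>k<m. \<Sum>l<m. w k * (\<Sum>r<K. u r k * u r l) * w l) = (\<Sum>r<K. (\<Sum>k<m. w k * u r k)^2)"
proof -
  have "(\<Sum>k<m. \<Sum>l<m. w k * (\<Sum>r<K. u r k * u r l) * w l) = (\<Sum>k<m. \<Sum>l<m. \<Sum>r<K. w k * u r k * (w l * u r l))"
  proof (intro sum.cong refl)
    fix k l
    have "w k * (\<Sum>r<K. u r k * u r l) * w l = (\<Sum>r<K. w k * (u r k * u r l) * w l)"
      by (simp add: sum_distrib_left sum_distrib_right)
    also have "\<dots> = (\<Sum>r<K. w k * u r k * (w l * u r l))"
      by (intro sum.cong refl) (simp add: mult_ac)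
    finally show "w k * (\<Sum>r<K. u r k * u r l) * w l = (\<Sum>r<K. w k * u r k * (w l * u r l))" .
  qed
  also have "\<dots> = (\<Sum>k<m. \<Sum>r<K. \<Sum>l<m. w k * u r k * (w l * u r l))"
    by (rule sum.cong[OF refl], rule sum.swap)
  also have "\<dots> = (\<Sum>r<K. \<Sum>k<m. \<Sum>l<m. w k * u r k * (w l * u r l))"
    by (rule sum.swap[of "\<lambda>k r. \<Sum>l<m. w k * u r k * (w l * u r l)" "{..<K}" "{..<m}"])
  also have "\<dots> = (\<Sum>r<K. (\<Sum>k<m. w k * u r k)^2)"
    by (intro sum.cong refl) (simp add: power2_eq_square sum_product)
  finally show ?thesis .
qed

lemma schoenberg:
  fixes V D0 :: "real mat"
  assumes V: "V \<in> carrier_mat n m" and n0: "n > 0"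
    and O3: "\<And>a b. a < n \<Longrightarrow> b < n \<Longrightarrow> (\<Sum>k<m. V $$ (a,k) * V $$ (b,k)) = (if a = b then 1 else 0) - 1 / real n"
    and D0: "EDM n D0"
  shows "\<exists>X0. psd_mat m X0 \<and> (\<forall>a<n. \<forall>b<n. kvf V m (\<lambda>k l. X0 $$ (k,l)) a b = D0 $$ (a,b))"
proof -
  from D0 obtain K :: nat and p :: "nat \<Rightarrow> nat \<Rightarrow> real" where p: "\<forall>a<n. \<forall>b<n. D0 $$ (a,b) = (\<Sum>l<K. (p a l - p b l)^2)"
    unfolding EDM_def by blast
  define u where "u r k = (\<Sum>c<n. V $$ (c,k) * p c r)" for r k
  define X0 where "X0 = mat m m (\<lambda>(k,l). \<Sum>r<K. u r k * u r l)"
  have X0c: "X0 \<in> carrier_mat m m" unfolding X0_def by simp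
  have sym: "symm_mat m X0" unfolding symm_mat_def X0_def
    by (auto simp: mult.commute)
  have psd: "psd_mat m X0" unfolding psd_mat_def
  proof (intro conjI sym ballI)
    fix x :: "real vec" assume x: "x \<in> carrier_vec m"
    have "x \<bullet> (X0 *\<^sub>v x) = (\<Sum>i<m. \<Sum>n<m. x $ i * ((\<Sum>r<K. u r i * u r n) * x $ n))"
      using x X0c by (simp add: X0_def scalar_prod_def atLeast0LessThan sum_distrib_left)
    also have "\<dots> = (\<Sum>k<m. \<Sum>l<m. x $ k * (\<Sum>r<K. u r k * u r l) * x $ l)"
      by (simp add: mult.assoc)
    also have "\<dots> = (\<Sum>r<K. (\<Sum>k<m. x $ k * u r k)^2)" by (rule rank_quad)
    also have "\<dots> \<ge> 0" by (simp add: sum_nonneg)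
    finally show "0 \<le> x \<bullet> (X0 *\<^sub>v x)" .
  qed
  have "kvf V m (\<lambda>k l. X0 $$ (k,l)) a b = D0 $$ (a,b)" if ab: "a < n" "b < n" for a b
  proof -
    have "kvf V m (\<lambda>k l. X0 $$ (k,l)) a b =
        (\<Sum>k<m. \<Sum>l<m. (V$$(a,k) - V$$(b,k)) * (\<Sum>r<K. u r k * u r l) * (V$$(a,l) - V$$(b,l)))"
      unfolding kvf_def X0_def by simp
    also have "\<dots> = (\<Sum>r<K. (\<Sum>k<m. (V$$(a,k) - V$$(b,k)) * u r k)^2)" by (rule rank_quad)
    also have "\<dots> = (\<Sum>r<K. (p a r - p b r)^2)"
    proof (intro sum.cong refl arg_cong[where f="\<lambda>x. x^2"])
      fix r
      have "(\<Sum>k<m. (V$$(a,k) - V$$(b,k)) * u r k) = (\<Sum>k<m. \<Sum>c<n. (V$$(a,k) - V$$(b,k)) * V $$ (c,k) * p c r)"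
        unfolding u_def by (simp add: sum_distrib_left mult.assoc)
      also have "\<dots> = (\<Sum>c<n. \<Sum>k<m. (V$$(a,k) * V $$ (c,k) - V$$(b,k) * V $$ (c,k)) * p c r)"
        by (subst sum.swap) (simp add: algebra_simps)
      also have "\<dots> = (\<Sum>c<n. ((\<Sum>k<m. V$$(a,k) * V $$ (c,k)) - (\<Sum>k<m. V$$(b,k) * V $$ (c,k))) * p c r)"
        by (intro sum.cong refl) (simp add: sum_distrib_right sum_subtractf left_diff_distrib)
      also have "\<dots> = (\<Sum>c<n. ((if a = c then 1 else 0) - (if b = c then 1 else 0)) * p c r)"
        by (intro sum.cong refl) (simp add: O3 ab)
      also have "\<dots> = (\<Sum>c<n. (if c = a then p c r else 0) - (if c = b then p c r else 0))"
        by (intro sum.cong refl) auto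
      also have "\<dots> = p a r - p b r"
        using ab by (simp add: sum_subtractf)
      finally show "(\<Sum>k<m. (V$$(a,k) - V$$(b,k)) * u r k) = p a r - p b r" .
    qed
    also have "\<dots> = D0 $$ (a,b)" using p ab by simp
    finally show ?thesis .
  qed
  then show ?thesis using psd by blast
qed



lemma kvf_inj:
  fixes V X :: "real mat"
  assumes V: "V \<in> carrier_mat n m" and n0: "n > 0"
    and O1: "\<And>k l. k < m \<Longrightarrow> l < m \<Longrightarrow> (\<Sum>a<n. V $$ (a,k) * V $$ (a,l)) = (if k = l then 1 else 0)"
    and O2: "\<And>k. k < m \<Longrightarrow> (\<Sum>a<n. V $$ (a,k)) = 0"
    and X: "X \<in> carrier_mat m m" and sym: "\<And>k l. k < m \<Longrightarrow> l < m \<Longrightarrow> X $$ (k,l) = X $$ (l,k)"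
    and z: "\<And>a b. a < n \<Longrightarrow> b < n \<Longrightarrow> kvf V m (\<lambda>k l. X $$ (k,l)) a b = 0"
  shows "X = 0\<^sub>m m m"
proof -
  define h where "h = (\<lambda>k l. X $$ (k,l))"
  define G where "G = Gf V m h"
  have rs: "(\<Sum>b<n. G a b) = 0" for a
  proof -
    have "(\<Sum>b<n. G a b) = (\<Sum>b<n. \<Sum>k<m. \<Sum>l<m. V$$(a,k) * h k l * V$$(b,l))"
      unfolding G_def Gf_def ..
    also have "\<dots> = (\<Sum>k<m. \<Sum>b<n. \<Sum>l<m. V$$(a,k) * h k l * V$$(b,l))" by (rule sum.swap)
    also have "\<dots> = (\<Sum>k<m. \<Sum>l<m. \<Sum>b<n. V$$(a,k) * h k l * V$$(b,l))"
      by (rule sum.cong[OF refl], rule sum.swap)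
    also have "\<dots> = (\<Sum>k<m. \<Sum>l<m. V$$(a,k) * h k l * (\<Sum>b<n. V$$(b,l)))"
      by (simp add: sum_distrib_left)
    also have "\<dots> = 0" by (simp add: O2)
    finally show ?thesis .
  qed
  have hs: "\<And>k l. k < m \<Longrightarrow> l < m \<Longrightarrow> h k l = h l k" unfolding h_def using sym by simp
  have eq: "G a a + G b b = 2 * G a b" if "a < n" "b < n" for a b
    using kvf_sym_expand[of m h V a b, OF hs] z[OF that] unfolding G_def h_def by simp
  define T where "T = (\<Sum>b<n. G b b)"
  have row: "real n * G a a + T = 0" if "a < n" for a
  proof -
    have "(\<Sum>b<n. G a a + G b b) = (\<Sum>b<n. 2 * G a b)" using eq that by (intro sum.cong) auto
    also have "\<dots> = 0" by (simp add: sum_distrib_left[symmetric] rs)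
    finally show ?thesis by (simp add: sum.distrib T_def)
  qed
  have "(\<Sum>a<n. real n * G a a + T) = 0" using row by simp
  then have "real n * T + real n * T = 0" by (simp add: sum.distrib sum_distrib_left[symmetric] T_def)
  then have T0: "T = 0" using n0 by simp
  have Gaa: "G a a = 0" if "a < n" for a using row[OF that] T0 n0 by simp
  have G0: "G a b = 0" if "a < n" "b < n" for a b using eq[OF that] Gaa that by simp
  have M0: "V * X * transpose_mat V = 0\<^sub>m n n"
  proof (rule eq_matI)
    fix a b assume "a < dim_row (0\<^sub>m n n :: real mat)" "b < dim_col (0\<^sub>m n n :: real mat)"
    then have ab: "a < n" "b < n" by auto
    show "(V * X * transpose_mat V) $$ (a,b) = 0\<^sub>m n n $$ (a,b)"
      using VXVt_entry[OF V X ab] G0[OF ab] ab unfolding G_def h_def by simp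
  qed (use V X in auto)
  have VtV: "transpose_mat V * V = 1\<^sub>m m"
  proof (rule eq_matI)
    fix k l assume "k < dim_row (1\<^sub>m m :: real mat)" "l < dim_col (1\<^sub>m m :: real mat)"
    then have kl: "k < m" "l < m" by auto
    show "(transpose_mat V * V) $$ (k,l) = 1\<^sub>m m $$ (k,l)"
      using V kl O1[OF kl] by (simp add: scalar_prod_def atLeast0LessThan)
  qed (use V in auto)
  have Vt: "transpose_mat V \<in> carrier_mat m n" using V by simp
  have "X = (transpose_mat V * V) * X * (transpose_mat V * V)" using VtV X by simp
  also have "\<dots> = transpose_mat V * (V * X) * (transpose_mat V * V)"
    using assoc_mult_mat[OF Vt V X] by simp
  also have "\<dots> = transpose_mat V * (V * X) * transpose_mat V * V"
  proof -
    have Pc: "transpose_mat V * (V * X) \<in> carrier_mat m m" using V X by simp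
    show ?thesis using assoc_mult_mat[OF Pc Vt V] by simp
  qed
  also have "\<dots> = transpose_mat V * (V * X * transpose_mat V) * V"
  proof -
    have VXc: "V * X \<in> carrier_mat n m" using V X by simp
    show ?thesis using assoc_mult_mat[OF Vt VXc Vt] by simp
  qed
  also have "\<dots> = 0\<^sub>m m m" using M0 V Vt by simp
  finally show ?thesis .
qed



lemma quad_form:
  fixes A :: "real mat"
  assumes A: "A \<in> carrier_mat m m" and x: "x \<in> carrier_vec m"
  shows "x \<bullet> (A *\<^sub>v x) = (\<Sum>k<m. \<Sum>l<m. x$k * A$$(k,l) * x$l)"
  using A x by (simp add: scalar_prod_def atLeast0LessThan sum_distrib_left mult.assoc)

lemma psd_comb:
  fixes A B :: "real mat"
  assumes A: "psd_mat m A" and B: "psd_mat m B" and t: "t \<ge> 0"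
  shows "psd_mat m (A + t \<cdot>\<^sub>m B)"
proof -
  have Ac: "A \<in> carrier_mat m m" and Bc: "B \<in> carrier_mat m m"
    using A B unfolding psd_mat_def symm_mat_def by auto
  have As: "A $$ (k,l) = A $$ (l,k)" if "k < m" "l < m" for k l
    using A that unfolding psd_mat_def symm_mat_def
    by (metis carrier_matD index_transpose_mat(1))
  have Bs: "B $$ (k,l) = B $$ (l,k)" if "k < m" "l < m" for k l
    using B that unfolding psd_mat_def symm_mat_def
    by (metis carrier_matD index_transpose_mat(1))
  have Cc: "A + t \<cdot>\<^sub>m B \<in> carrier_mat m m" using Ac Bc by simp
  have sym: "symm_mat m (A + t \<cdot>\<^sub>m B)" unfolding symm_mat_def
  proof
    show "transpose_mat (A + t \<cdot>\<^sub>m B) = A + t \<cdot>\<^sub>m B"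
      by (rule eq_matI) (use Ac Bc As Bs in auto)
  qed (rule Cc)
  show ?thesis unfolding psd_mat_def
  proof (intro conjI sym ballI)
    fix x :: "real vec" assume x: "x \<in> carrier_vec m"
    have "x \<bullet> ((A + t \<cdot>\<^sub>m B) *\<^sub>v x) = (\<Sum>k<m. \<Sum>l<m. x$k * (A + t \<cdot>\<^sub>m B)$$(k,l) * x$l)"
      by (rule quad_form[OF Cc x])
    also have "\<dots> = (\<Sum>k<m. \<Sum>l<m. x$k * A$$(k,l) * x$l + t * (x$k * B$$(k,l) * x$l))"
      using Ac Bc by (intro sum.cong refl) (simp add: algebra_simps)
    also have "\<dots> = x \<bullet> (A *\<^sub>v x) + t * (x \<bullet> (B *\<^sub>v x))"
      by (simp add: quad_form[OF Ac x] quad_form[OF Bc x] sum.distrib sum_distrib_left)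
    also have "\<dots> \<ge> 0" using A B x t unfolding psd_mat_def by simp
    finally show "0 \<le> x \<bullet> ((A + t \<cdot>\<^sub>m B) *\<^sub>v x)" .
  qed
qed

lemma psd_smult:
  fixes A :: "real mat"
  assumes A: "psd_mat m A" and t: "t \<ge> 0"
  shows "psd_mat m (t \<cdot>\<^sub>m A)"
proof -
  have Ac: "A \<in> carrier_mat m m" using A unfolding psd_mat_def symm_mat_def by auto
  have "psd_mat m (0\<^sub>m m m + t \<cdot>\<^sub>m A)"
  proof (rule psd_comb[OF _ A t])
    show "psd_mat m (0\<^sub>m m m)" unfolding psd_mat_def symm_mat_def
      by (auto simp: scalar_prod_def)
  qed
  moreover have "0\<^sub>m m m + t \<cdot>\<^sub>m A = t \<cdot>\<^sub>m A" using Ac by simp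
  ultimately show ?thesis by simp
qed

lemma psd_one: "psd_mat m (1\<^sub>m m :: real mat)"
  unfolding psd_mat_def symm_mat_def
proof (intro conjI ballI)
  show "transpose_mat (1\<^sub>m m :: real mat) = 1\<^sub>m m" by (rule eq_matI) auto
  fix x :: "real vec" assume x: "x \<in> carrier_vec m"
  show "0 \<le> x \<bullet> (1\<^sub>m m *\<^sub>v x)" using x
    by (simp add: scalar_prod_def sum_nonneg)
qed simp

lemma fro_expand:
  fixes F :: "nat \<Rightarrow> nat \<Rightarrow> real"
  assumes ij: "i \<noteq> j" "i < n" "j < n" and Fs: "F i j = F j i"
  shows "(\<Sum>a<n. \<Sum>b<n. (t * F a b - \<alpha> * ((if a = i \<and> b = j then 1 else 0) + (if a = j \<and> b = i then 1 else 0)))^2)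
     = t^2 * (\<Sum>a<n. \<Sum>b<n. (F a b)^2) - 4 * t * \<alpha> * F i j + 2 * \<alpha>^2"
proof -
  define e :: "nat \<Rightarrow> nat \<Rightarrow> real" where "e a b = (if a = i \<and> b = j then 1 else 0) + (if a = j \<and> b = i then 1 else 0)" for a b
  have sq: "(t * F a b - \<alpha> * e a b)^2 = t^2 * (F a b)^2 - 2 * t * \<alpha> * (F a b * e a b) + \<alpha>^2 * e a b" for a b
    using ij unfolding e_def by (auto simp: power2_eq_square algebra_simps)
  have s1: "(\<Sum>b<n. F a b * e a b) = (if a = i then F a j else 0) + (if a = j then F a i else 0)" if "a < n" for a
  proof -
    have "(\<Sum>b<n. F a b * e a b) = (\<Sum>b<n. (if b = j then (if a = i then F a b else 0) else 0) + (if b = i then (if a = j then F a b else 0) else 0))"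
      unfolding e_def by (intro sum.cong refl) auto
    also have "\<dots> = (if a = i then F a j else 0) + (if a = j then F a i else 0)"
      using ij by (simp add: sum.distrib)
    finally show ?thesis .
  qed
  have s2: "(\<Sum>b<n. e a b) = (if a = i then 1 else 0) + (if a = j then 1 else 0)" if "a < n" for a
  proof -
    have "(\<Sum>b<n. e a b) = (\<Sum>b<n. (if b = j then (if a = i then 1 else 0) else 0) + (if b = i then (if a = j then 1 else 0) else 0))"
      unfolding e_def by (intro sum.cong refl) auto
    also have "\<dots> = (if a = i then 1 else 0) + (if a = j then 1 else 0)"
      using ij by (simp add: sum.distrib)
    finally show ?thesis .
  qed
  have "(\<Sum>a<n. \<Sum>b<n. (t * F a b - \<alpha> * e a b)^2) =
      t^2 * (\<Sum>a<n. \<Sum>b<n. (F a b)^2) - 2 * t * \<alpha> * (\<Sum>a<n. \<Sum>b<n. F a b * e a b) + \<alpha>^2 * (\<Sum>a<n. \<Sum>b<n. e a b)"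
    by (simp add: sq sum.distrib sum_subtractf sum_distrib_left)
  also have "(\<Sum>a<n. \<Sum>b<n. F a b * e a b) = F i j + F j i"
    using ij by (simp add: s1 sum.distrib)
  also have "(\<Sum>a<n. \<Sum>b<n. e a b) = 2"
    using ij by (simp add: s2 sum.distrib)
  finally show ?thesis unfolding e_def using Fs by simp
qed

lemma fro_sq_entries: "A \<in> carrier_mat n n \<Longrightarrow> fro_sq A = (\<Sum>a<n. \<Sum>b<n. (A $$ (a,b))^2)"
  unfolding fro_sq_def by simp

lemma fro_zero:
  fixes A :: "real mat"
  assumes A: "A \<in> carrier_mat n n" and f: "fro_sq A \<le> 0"
  shows "A = 0\<^sub>m n n"
proof (rule eq_matI)
  fix a b assume "a < dim_row (0\<^sub>m n n :: real mat)" "b < dim_col (0\<^sub>m n n :: real mat)"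
  then have ab: "a < n" "b < n" by auto
  have nn: "\<And>a. (\<Sum>b<n. (A $$ (a,b))^2) \<ge> 0" by (simp add: sum_nonneg)
  have "(\<Sum>a<n. \<Sum>b<n. (A $$ (a,b))^2) = 0" using f fro_sq_entries[OF A] nn
    by (simp add: sum_nonneg antisym)
  then have "(\<Sum>b<n. (A $$ (a,b))^2) = 0" using ab nn by (simp add: sum_nonneg_eq_0_iff)
  then have "(A $$ (a,b))^2 = 0" using ab by (simp add: sum_nonneg_eq_0_iff)
  then show "A $$ (a,b) = 0\<^sub>m n n $$ (a,b)" using ab by simp
qed (use A in auto)



lemma adj_formula:
  fixes V :: "real mat"
  assumes V: "V \<in> carrier_mat n m" and ij: "i < j" "j < n"
  shows "KV_adj V (Emat n i j) = mat m m (\<lambda>(a,b). 2 * ((row V i - row V j) $ a) * ((row V i - row V j) $ b))"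
proof -
  define f :: "nat \<Rightarrow> real" where "f a = (if a = i then 1 else 0) - (if a = j then 1 else 0)" for a
  define w where "w k = V $$ (i,k) - V $$ (j,k)" for k
  have L: "lindK_adj n (Emat n i j) = mat n n (\<lambda>(a,b). 2 * f a * f b)"
  proof (rule eq_matI)
    fix a b assume "a < dim_row (mat n n (\<lambda>(a,b). 2 * f a * f b))" "b < dim_col (mat n n (\<lambda>(a,b). 2 * f a * f b))"
    then have ab: "a < n" "b < n" by auto
    have rs: "(\<Sum>c<n. Emat n i j $$ (a,c)) = (if a = i then 1 else 0) + (if a = j then 1 else 0)"
    proof -
      have "(\<Sum>c<n. Emat n i j $$ (a,c)) = (\<Sum>c<n. (if c = j then (if a = i then 1 else 0) else 0) + (if c = i then (if a = j then 1 else 0) else 0))"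
        using ab unfolding Emat_def by (intro sum.cong refl) auto
      also have "\<dots> = (if a = i then 1 else 0) + (if a = j then 1 else 0)"
        using ij by (simp add: sum.distrib)
      finally show ?thesis .
    qed
    show "lindK_adj n (Emat n i j) $$ (a,b) = mat n n (\<lambda>(a,b). 2 * f a * f b) $$ (a,b)"
      using ab ij rs unfolding lindK_adj_def f_def by (auto simp: Emat_def)
  qed (auto simp: lindK_adj_def)
  have fw: "(\<Sum>a<n. V $$ (a,k) * f a) = w k" for k
  proof -
    have "(\<Sum>a<n. V $$ (a,k) * f a) = (\<Sum>a<n. (if a = i then V $$ (a,k) else 0) - (if a = j then V $$ (a,k) else 0))"
      unfolding f_def by (intro sum.cong refl) auto
    also have "\<dots> = w k" using ij unfolding w_def by (simp add: sum_subtractf)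
    finally show ?thesis .
  qed
  have M1: "transpose_mat V * lindK_adj n (Emat n i j) = mat m n (\<lambda>(k,b). 2 * w k * f b)"
  proof (rule eq_matI)
    fix k b assume "k < dim_row (mat m n (\<lambda>(k,b). 2 * w k * f b))" "b < dim_col (mat m n (\<lambda>(k,b). 2 * w k * f b))"
    then have kb: "k < m" "b < n" by auto
    have "(transpose_mat V * lindK_adj n (Emat n i j)) $$ (k,b) = (\<Sum>a<n. V $$ (a,k) * (2 * f a * f b))"
      using V kb L by (simp add: scalar_prod_def atLeast0LessThan)
    also have "\<dots> = 2 * f b * (\<Sum>a<n. V $$ (a,k) * f a)"
      by (simp add: sum_distrib_left mult_ac)
    finally show "(transpose_mat V * lindK_adj n (Emat n i j)) $$ (k,b) = mat m n (\<lambda>(k,b). 2 * w k * f b) $$ (k,b)"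
      using kb fw by simp
  qed (use V L in auto)
  show ?thesis unfolding KV_adj_def
  proof (rule eq_matI)
    fix k l assume "k < dim_row (mat m m (\<lambda>(a,b). 2 * ((row V i - row V j) $ a) * ((row V i - row V j) $ b)))"
      "l < dim_col (mat m m (\<lambda>(a,b). 2 * ((row V i - row V j) $ a) * ((row V i - row V j) $ b)))"
    then have kl: "k < m" "l < m" by auto
    have "(transpose_mat V * lindK_adj (dim_row V) (Emat n i j) * V) $$ (k,l) = (\<Sum>b<n. 2 * w k * f b * V $$ (b,l))"
      using V kl M1 by (simp add: scalar_prod_def atLeast0LessThan)
    also have "\<dots> = 2 * w k * (\<Sum>b<n. V $$ (b,l) * f b)"
      by (simp add: sum_distrib_left mult_ac)
    also have "\<dots> = 2 * w k * w l" using fw by simp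
    finally show "(transpose_mat V * lindK_adj (dim_row V) (Emat n i j) * V) $$ (k,l) =
      mat m m (\<lambda>(a,b). 2 * ((row V i - row V j) $ a) * ((row V i - row V j) $ b)) $$ (k,l)"
      using kl V ij unfolding w_def by simp
  qed (use V in auto)
qed

lemma trace_formula:
  fixes V X :: "real mat"
  assumes V: "V \<in> carrier_mat n m" and ij: "i < n" "j < n" and X: "X \<in> carrier_mat m m"
  shows "mtrace (X * mat m m (\<lambda>(a,b). 2 * ((row V i - row V j) $ a) * ((row V i - row V j) $ b)))
      = 2 * kvf V m (\<lambda>k l. X $$ (k,l)) i j"
proof -
  have "mtrace (X * mat m m (\<lambda>(a,b). 2 * ((row V i - row V j) $ a) * ((row V i - row V j) $ b)))
     = (\<Sum>k<m. \<Sum>l<m. X $$ (k,l) * (2 * (V$$(i,l) - V$$(j,l)) * (V$$(i,k) - V$$(j,k))))"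
    unfolding mtrace_def using V X ij by (simp add: scalar_prod_def atLeast0LessThan)
  also have "\<dots> = 2 * kvf V m (\<lambda>k l. X $$ (k,l)) i j"
    unfolding kvf_def by (simp add: sum_distrib_left, intro sum.cong refl, simp add: algebra_simps)
  finally show ?thesis .
qed

lemma kvf_one:
  fixes V :: "real mat"
  shows "kvf V m (\<lambda>k l. (1\<^sub>m m :: real mat) $$ (k,l)) a b = (\<Sum>k<m. (V$$(a,k) - V$$(b,k))^2)"
proof -
  have "kvf V m (\<lambda>k l. (1\<^sub>m m :: real mat) $$ (k,l)) a b =
      (\<Sum>k<m. \<Sum>l<m. if l = k then (V$$(a,k) - V$$(b,k)) * (V$$(a,l) - V$$(b,l)) else 0)"
    unfolding kvf_def by (intro sum.cong refl) auto
  also have "\<dots> = (\<Sum>k<m. (V$$(a,k) - V$$(b,k))^2)" by (simp add: power2_eq_square)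
  finally show ?thesis .
qed

lemma wnorm:
  fixes V :: "real mat"
  assumes O3: "\<And>a b. a < n \<Longrightarrow> b < n \<Longrightarrow> (\<Sum>k<m. V $$ (a,k) * V $$ (b,k)) = (if a = b then 1 else 0) - 1 / real n"
    and ij: "i < n" "j < n" "i \<noteq> j"
  shows "(\<Sum>k<m. (V$$(i,k) - V$$(j,k))^2) = 2"
proof -
  have "(\<Sum>k<m. (V$$(i,k) - V$$(j,k))^2) = (\<Sum>k<m. V$$(i,k) * V$$(i,k)) + (\<Sum>k<m. V$$(j,k) * V$$(j,k)) - 2 * (\<Sum>k<m. V$$(i,k) * V$$(j,k))"
    by (simp add: power2_eq_square algebra_simps sum.distrib sum_subtractf sum_distrib_left)
  also have "\<dots> = 2" using O3 ij by simp
  finally show ?thesis .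
qed



lemma alg_pos:
  fixes Q c :: real
  assumes Q: "Q \<ge> 0" and h: "\<And>t. t \<ge> 0 \<Longrightarrow> t^2 * Q - t * c \<ge> 0"
  shows "c \<le> 0"
proof (rule ccontr)
  assume "\<not> c \<le> 0" then have c: "c > 0" by simp
  define t where "t = c / (Q + 1)"
  have t0: "t > 0" using c Q unfolding t_def by simp
  have "t * Q < c" unfolding t_def using c Q by (simp add: field_simps)
  then have "t * (t * Q - c) < 0" using t0 by (simp add: mult_pos_neg)
  moreover have "t * (t * Q - c) = t^2 * Q - t * c" by (simp add: power2_eq_square algebra_simps)
  ultimately show False using h[of t] t0 by simp
qed

lemma alg_neg:
  fixes Q c :: real
  assumes Q: "Q \<ge> 0" and h: "\<And>t. -1 \<le> t \<Longrightarrow> t \<le> 0 \<Longrightarrow> t^2 * Q - t * c \<ge> 0"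
  shows "c \<ge> 0"
proof (rule ccontr)
  assume "\<not> c \<ge> 0" then have c: "c < 0" by simp
  define t where "t = c / (Q - c + 1)"
  have pos: "Q - c + 1 > 0" using c Q by simp
  have t0: "t < 0" using c pos unfolding t_def by (simp add: divide_neg_pos)
  have t1: "-1 \<le> t" using c Q pos unfolding t_def by (simp add: field_simps)
  have "t * Q > c" unfolding t_def using c Q pos by (simp add: field_simps)
  then have "t * (t * Q - c) < 0" using t0 by (simp add: mult_neg_pos)
  moreover have "t * (t * Q - c) = t^2 * Q - t * c" by (simp add: power2_eq_square algebra_simps)
  ultimately show False using h[of t] t0 t1 by simp
qed


lemma psd_facts:
  assumes "psd_mat m X"
  shows "X \<in> carrier_mat m m" "\<And>k l. k < m \<Longrightarrow> l < m \<Longrightarrow> X $$ (k,l) = X $$ (l,k)"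
  using assms unfolding psd_mat_def symm_mat_def
  by (auto, metis carrier_matD index_transpose_mat(1))

lemma symm_facts:
  assumes "symm_mat m X"
  shows "X \<in> carrier_mat m m" "\<And>k l. k < m \<Longrightarrow> l < m \<Longrightarrow> X $$ (k,l) = X $$ (l,k)"
  using assms unfolding symm_mat_def
  by (auto, metis carrier_matD index_transpose_mat(1))

lemma kvf_zero: "kvf V m (\<lambda>k l. 0) a b = 0"
  unfolding kvf_def by simp

lemma kvf_scale: "kvf V m (\<lambda>k l. s * h k l) a b = s * kvf V m h a b"
proof -
  have "kvf V m (\<lambda>k l. s * h k l) a b = kvf V m (\<lambda>k l. 0 + s * h k l) a b" by simp
  also have "\<dots> = s * kvf V m h a b" using kvf_lin[of V m "\<lambda>k l. 0" s h a b] kvf_zero by simp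
  finally show ?thesis .
qed

theorem mainTheorem3:
  fixes n :: nat and V D0 Xbar :: "real mat" and i j :: nat and \<alpha> :: real
  assumes n2: "n \<ge> 2"
    and V: "V \<in> carrier_mat n (n - 1)"
    and orth: "transpose_mat (mat n n (\<lambda>(a,b). if b < n - 1 then V $$ (a,b) else 1 / sqrt (real n)))
                 * mat n n (\<lambda>(a,b). if b < n - 1 then V $$ (a,b) else 1 / sqrt (real n)) = 1\<^sub>m n"
    and D0: "EDM n D0"
    and ij: "i < j" "j < n"
    and notEDM: "\<not> EDM n (D0 + \<alpha> \<cdot>\<^sub>m Emat n i j)"
    and Xbar_min: "psd_mat (n - 1) Xbar"
      "\<forall>X. psd_mat (n - 1) X \<longrightarrow>
          (1/2) * fro_sq (KV V Xbar - (D0 + \<alpha> \<cdot>\<^sub>m Emat n i j))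
            \<le> (1/2) * fro_sq (KV V X - (D0 + \<alpha> \<cdot>\<^sub>m Emat n i j))"
  shows "KV_adj V (Emat n i j) =
           mat (n - 1) (n - 1) (\<lambda>(a,b). 2 * ((row V i - row V j) $ a) * ((row V i - row V j) $ b))
       \<and> \<alpha> \<noteq> 0
       \<and> KV_adj V (Emat n i j) \<noteq> 0\<^sub>m (n - 1) (n - 1)
       \<and> psd_mat (n - 1) (KV_adj V (Emat n i j))
       \<and> ((psd_mat (n - 1) (KV_pinv V D0) \<and> mtrace (KV_pinv V D0 * KV_adj V (Emat n i j)) = 0)
            \<longleftrightarrow> mtrace (KV_pinv V D0 * KV_adj V (Emat n i j)) = 0)
       \<and> (D0 = KV V Xbar \<longleftrightarrow>
            (psd_mat (n - 1) (KV_pinv V D0) \<and> mtrace (KV_pinv V D0 * KV_adj V (Emat n i j)) = 0 \<and> \<alpha> < 0))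
       \<and> ((psd_mat (n - 1) (KV_pinv V D0) \<and> mtrace (KV_pinv V D0 * KV_adj V (Emat n i j)) = 0 \<and> \<alpha> < 0)
            \<longleftrightarrow> (D0 $$ (i,j) = 0 \<and> \<alpha> < 0))"
proof -
  define m where "m = n - 1"
  have Vc: "V \<in> carrier_mat n m" using V m_def by simp
  have n0: "n > 0" using n2 by simp
  note OF = orth_facts[OF n2 V orth]
  have O1: "\<And>k l. k < m \<Longrightarrow> l < m \<Longrightarrow> (\<Sum>a<n. V $$ (a,k) * V $$ (a,l)) = (if k = l then 1 else 0)"
    using OF(1) m_def by simp
  have O2: "\<And>k. k < m \<Longrightarrow> (\<Sum>a<n. V $$ (a,k)) = 0" using OF(2) m_def by simp
  have O3: "\<And>a b. a < n \<Longrightarrow> b < n \<Longrightarrow> (\<Sum>k<m. V $$ (a,k) * V $$ (b,k)) = (if a = b then 1 else 0) - 1 / real n"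
    using OF(3) m_def by simp
  have ijne: "i \<noteq> j" "i < n" using ij by auto
  have D0c: "D0 \<in> carrier_mat n n" using D0 unfolding EDM_def by simp
  have Yeq: "KV_adj V (Emat n i j) = mat m m (\<lambda>(a,b). 2 * ((row V i - row V j) $ a) * ((row V i - row V j) $ b))"
    using adj_formula[OF Vc ij] .
  define w where "w k = V$$(i,k) - V$$(j,k)" for k
  have rw: "(row V i - row V j) $ k = w k" if "k < m" for k using that Vc ij w_def by simp
  have Yw: "KV_adj V (Emat n i j) = mat m m (\<lambda>(a,b). 2 * w a * w b)"
    unfolding Yeq by (rule eq_matI) (auto simp: rw)
  have wsum: "(\<Sum>k<m. (w k)^2) = 2"
    unfolding w_def using wnorm[where V=V and m=m and n=n, OF O3 ijne(2) ij(2) ijne(1)] .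
  have alpha: "\<alpha> \<noteq> 0"
  proof
    assume a0: "\<alpha> = 0"
    have "D0 + \<alpha> \<cdot>\<^sub>m Emat n i j = D0"
      by (rule eq_matI) (use D0c a0 in \<open>auto simp: Emat_def\<close>)
    then show False using notEDM D0 by simp
  qed
  have Ynz: "KV_adj V (Emat n i j) \<noteq> 0\<^sub>m m m"
  proof
    assume z: "KV_adj V (Emat n i j) = 0\<^sub>m m m"
    have "2 * w k * w k = 0" if "k < m" for k
    proof -
      have "mat m m (\<lambda>(a,b). 2 * w a * w b) $$ (k,k) = (0\<^sub>m m m :: real mat) $$ (k,k)"
        using z Yw by simp
      then show ?thesis using that by simp
    qed
    then have "(\<Sum>k<m. (w k)^2) = 0" by (simp add: power2_eq_square)
    then show False using wsum by simp
  qed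
  have Ypsd: "psd_mat m (KV_adj V (Emat n i j))"
    unfolding Yw psd_mat_def symm_mat_def
  proof (intro conjI ballI)
    show "mat m m (\<lambda>(a,b). 2 * w a * w b) \<in> carrier_mat m m" by simp
    show "transpose_mat (mat m m (\<lambda>(a,b). 2 * w a * w b)) = mat m m (\<lambda>(a,b). 2 * w a * w b)"
      by (rule eq_matI) auto
    fix x :: "real vec" assume x: "x \<in> carrier_vec m"
    have "x \<bullet> (mat m m (\<lambda>(a,b). 2 * w a * w b) *\<^sub>v x) = (\<Sum>k<m. \<Sum>l<m. x$k * (mat m m (\<lambda>(a,b). 2 * w a * w b))$$(k,l) * x$l)"
      by (rule quad_form[OF _ x]) simp
    also have "\<dots> = (\<Sum>k<m. \<Sum>l<m. (x$k * w k) * (x$l * w l) * 2)"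
      by (intro sum.cong refl) (simp add: mult_ac)
    also have "\<dots> = 2 * (\<Sum>k<m. \<Sum>l<m. (x$k * w k) * (x$l * w l))"
      by (simp add: sum_distrib_left mult_ac)
    also have "\<dots> = 2 * (\<Sum>k<m. x$k * w k)^2"
      by (simp only: power2_eq_square sum_product)
    also have "\<dots> \<ge> 0" by simp
    finally show "0 \<le> x \<bullet> (mat m m (\<lambda>(a,b). 2 * w a * w b) *\<^sub>v x)" .
  qed
  obtain X0 where X0psd: "psd_mat m X0"
    and X0k: "\<forall>a<n. \<forall>b<n. kvf V m (\<lambda>k l. X0 $$ (k,l)) a b = D0 $$ (a,b)"
    using schoenberg[OF Vc n0 O3 D0] by blast
  note X0c = psd_facts(1)[OF X0psd] and X0s = psd_facts(2)[OF X0psd]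
  have D0s: "D0 $$ (a,b) = D0 $$ (b,a)" if "a < n" "b < n" for a b
  proof -
    have "D0 $$ (a,b) = kvf V m (\<lambda>k l. X0 $$ (k,l)) a b" using X0k that by simp
    also have "\<dots> = kvf V m (\<lambda>k l. X0 $$ (k,l)) b a" by (rule kvf_swap[symmetric])
    also have "\<dots> = D0 $$ (b,a)" using X0k that by simp
    finally show ?thesis .
  qed
  have KV_X0: "KV V X0 = D0"
  proof (rule eq_matI)
    fix a b assume "a < dim_row D0" "b < dim_col D0"
    then have ab: "a < n" "b < n" using D0c by auto
    show "KV V X0 $$ (a,b) = D0 $$ (a,b)" using KV_entry[OF Vc X0c ab X0s] X0k ab by simp
  qed (use D0c Vc in \<open>auto simp: KV_def lindK_def\<close>)
  have fronn: "fro_sq A \<ge> 0" for A by (simp add: fro_sq_def sum_nonneg)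
  have pinv: "KV_pinv V D0 = X0"
  proof -
    have dc: "dim_col V = m" using Vc by simp
    define LS where "LS = {X. symm_mat m X \<and> (\<forall>Z. symm_mat m Z \<longrightarrow> fro_sq (KV V X - D0) \<le> fro_sq (KV V Z - D0))}"
    have fro0: "fro_sq (KV V X0 - D0) = 0" unfolding KV_X0 using D0c by (simp add: fro_sq_def)
    have X0sy: "symm_mat m X0" using X0psd unfolding psd_mat_def by simp
    have X0LS: "X0 \<in> LS" unfolding LS_def using X0sy fro0 fronn by simp
    have uniq: "X = X0" if XL: "X \<in> LS" for X
    proof -
      have Xs: "symm_mat m X" using XL unfolding LS_def by auto
      note Xc = symm_facts(1)[OF Xs] and Xsy = symm_facts(2)[OF Xs]
      have allZ: "\<forall>Z. symm_mat m Z \<longrightarrow> fro_sq (KV V X - D0) \<le> fro_sq (KV V Z - D0)" using XL unfolding LS_def by simp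
      have fX: "fro_sq (KV V X - D0) \<le> 0" using spec[OF allZ, of X0] X0sy fro0 by simp
      have cX: "KV V X - D0 \<in> carrier_mat n n" by (rule minus_carrier_mat[OF D0c])
      have z: "KV V X - D0 = 0\<^sub>m n n" by (rule fro_zero[OF cX fX])
      have eqk: "kvf V m (\<lambda>k l. X $$ (k,l)) a b = kvf V m (\<lambda>k l. X0 $$ (k,l)) a b" if ab: "a < n" "b < n" for a b
      proof -
        have "(KV V X - D0) $$ (a,b) = (0\<^sub>m n n :: real mat) $$ (a,b)" by (simp only: z)
        then have "(KV V X - D0) $$ (a,b) = 0" using ab by simp
        then have e1: "KV V X $$ (a,b) = D0 $$ (a,b)" using ab D0c by simp
        have "kvf V m (\<lambda>k l. X $$ (k,l)) a b = KV V X $$ (a,b)" by (rule KV_entry[OF Vc Xc ab Xsy, symmetric])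
        also have "\<dots> = D0 $$ (a,b)" by (rule e1)
        also have "\<dots> = kvf V m (\<lambda>k l. X0 $$ (k,l)) a b" using X0k ab by simp
        finally show ?thesis .
      qed
      have "X - X0 = 0\<^sub>m m m"
      proof (rule kvf_inj[OF Vc n0 O1 O2])
        show "X - X0 \<in> carrier_mat m m" by (rule minus_carrier_mat[OF X0c])
        show "(X - X0) $$ (k,l) = (X - X0) $$ (l,k)" if "k < m" "l < m" for k l
        proof -
          have "(X - X0) $$ (k,l) = X $$ (k,l) - X0 $$ (k,l)" using that X0c by simp
          moreover have "(X - X0) $$ (l,k) = X $$ (l,k) - X0 $$ (l,k)" using that X0c by simp
          ultimately show ?thesis using Xsy[OF that] X0s[OF that] by linarith
        qed
        show "kvf V m (\<lambda>k l. (X - X0) $$ (k,l)) a b = 0" if ab: "a < n" "b < n" for a b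
        proof -
          have "kvf V m (\<lambda>k l. (X - X0) $$ (k,l)) a b = kvf V m (\<lambda>k l. X $$ (k,l) + (-1) * X0 $$ (k,l)) a b"
            by (rule kvf_cong) (use Xc X0c in simp)
          also have "\<dots> = 0" using kvf_lin[of V m "\<lambda>k l. X $$ (k,l)" "-1" "\<lambda>k l. X0 $$ (k,l)" a b] eqk[OF ab] by linarith
          finally show ?thesis .
        qed
      qed
      show "X = X0"
      proof (rule eq_matI)
        fix k l assume "k < dim_row X0" "l < dim_col X0"
        then have kl: "k < m" "l < m" using X0c by auto
        have "(X - X0) $$ (k,l) = 0" using \<open>X - X0 = 0\<^sub>m m m\<close> kl by simp
        then show "X $$ (k,l) = X0 $$ (k,l)" using kl X0c by simp
      qed (use Xc X0c in auto)
    qed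
    have th: "KV_pinv V D0 = (THE X. X \<in> LS \<and> (\<forall>Z \<in> LS. fro_sq X \<le> fro_sq Z))"
      unfolding KV_pinv_def Let_def dc LS_def by (rule refl)
    show ?thesis unfolding th
    proof (rule the_equality)
      show "X0 \<in> LS \<and> (\<forall>Z \<in> LS. fro_sq X0 \<le> fro_sq Z)"
        using X0LS uniq by blast
      show "X = X0" if "X \<in> LS \<and> (\<forall>Z \<in> LS. fro_sq X \<le> fro_sq Z)" for X
        using that uniq by blast
    qed
  qed
  have trace: "mtrace (KV_pinv V D0 * KV_adj V (Emat n i j)) = 2 * D0 $$ (i,j)"
    unfolding pinv Yeq using trace_formula[OF Vc ijne(2) ij(2) X0c] X0k ijne ij by simp
  define Dn where "Dn = D0 + \<alpha> \<cdot>\<^sub>m Emat n i j"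
  have Dnc: "Dn \<in> carrier_mat n n" unfolding Dn_def Emat_def by (intro add_carrier_mat smult_carrier_mat mat_carrier)
  have FRO: "fro_sq (KV V Z - Dn) = t^2 * (\<Sum>a<n. \<Sum>b<n. (F a b)^2) - 4*t*\<alpha>*F i j + 2*\<alpha>^2"
    if Zc: "Z \<in> carrier_mat m m" and Zs: "\<And>k l. k < m \<Longrightarrow> l < m \<Longrightarrow> Z $$ (k,l) = Z $$ (l,k)"
      and Fs: "F i j = F j i"
      and ZF: "\<And>a b. a < n \<Longrightarrow> b < n \<Longrightarrow> kvf V m (\<lambda>k l. Z $$ (k,l)) a b = D0 $$ (a,b) + t * F a b"
    for Z t F
  proof -
    have "fro_sq (KV V Z - Dn) = (\<Sum>a<n. \<Sum>b<n. ((KV V Z - Dn) $$ (a,b))^2)"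
      by (rule fro_sq_entries[OF minus_carrier_mat[OF Dnc]])
    also have "\<dots> = (\<Sum>a<n. \<Sum>b<n. (t * F a b - \<alpha> * ((if a = i \<and> b = j then 1 else 0) + (if a = j \<and> b = i then 1 else 0)))^2)"
    proof (intro sum.cong refl)
      fix a b assume "a \<in> {..<n}" "b \<in> {..<n}"
      then have ab: "a < n" "b < n" by auto
      show "((KV V Z - Dn) $$ (a,b))^2 = (t * F a b - \<alpha> * ((if a = i \<and> b = j then 1 else 0) + (if a = j \<and> b = i then 1 else 0)))^2"
        using ab D0c KV_entry[OF Vc Zc ab Zs] ZF[OF ab] by (simp add: Dn_def Emat_def)
    qed
    also have "\<dots> = t^2 * (\<Sum>a<n. \<Sum>b<n. (F a b)^2) - 4*t*\<alpha>*F i j + 2*\<alpha>^2"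
      by (rule fro_expand[OF ijne(1) ijne(2) ij(2) Fs])
    finally show ?thesis .
  qed
  note Xbc = psd_facts(1)[OF Xbar_min(1)[folded m_def]] and Xbs = psd_facts(2)[OF Xbar_min(1)[folded m_def]]
  have MIN: "fro_sq (KV V Xbar - Dn) \<le> fro_sq (KV V X - Dn)" if "psd_mat m X" for X
    using Xbar_min(2) that unfolding Dn_def m_def by auto
  have c_a: "D0 = KV V Xbar" if c: "D0 $$ (i,j) = 0" "\<alpha> < 0"
  proof -
    define F where "F a b = kvf V m (\<lambda>k l. Xbar $$ (k,l)) a b - D0 $$ (a,b)" for a b
    have Fs: "F i j = F j i" unfolding F_def using kvf_swap[of V m "\<lambda>k l. Xbar $$ (k,l)" i j] D0s[OF ijne(2) ij(2)] by linarith
    have f1: "fro_sq (KV V Xbar - Dn) = 1^2 * (\<Sum>a<n. \<Sum>b<n. (F a b)^2) - 4*1*\<alpha>*F i j + 2*\<alpha>^2"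
    proof (rule FRO[OF Xbc Xbs Fs])
      fix a b assume "a < n" "b < n"
      show "kvf V m (\<lambda>k l. Xbar $$ (k, l)) a b = D0 $$ (a, b) + 1 * F a b"
        unfolding F_def by simp
    qed
    have f2: "fro_sq (KV V X0 - Dn) = 0^2 * (\<Sum>a<n. \<Sum>b<n. (F a b)^2) - 4*0*\<alpha>*F i j + 2*\<alpha>^2"
    proof (rule FRO[OF X0c X0s Fs])
      fix a b assume "a < n" "b < n"
      then show "kvf V m (\<lambda>k l. X0 $$ (k, l)) a b = D0 $$ (a, b) + 0 * F a b"
        using X0k by simp
    qed
    have Fij: "F i j \<ge> 0" unfolding F_def using c kvf_psd[OF Xbar_min(1)[folded m_def]] by simp
    have "(\<Sum>a<n. \<Sum>b<n. (F a b)^2) \<le> 0"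
    proof -
      have "-4*\<alpha>*F i j \<ge> 0" using Fij c by (simp add: mult_nonpos_nonneg)
      then show ?thesis using MIN[OF X0psd] f1 f2 by simp
    qed
    moreover have "fro_sq (KV V Xbar - D0) = (\<Sum>a<n. \<Sum>b<n. (F a b)^2)"
    proof -
      have "fro_sq (KV V Xbar - D0) = (\<Sum>a<n. \<Sum>b<n. ((KV V Xbar - D0) $$ (a,b))^2)"
        by (rule fro_sq_entries[OF minus_carrier_mat[OF D0c]])
      also have "\<dots> = (\<Sum>a<n. \<Sum>b<n. (F a b)^2)"
        by (intro sum.cong refl) (use D0c KV_entry[OF Vc Xbc _ _ Xbs] in \<open>simp add: F_def\<close>)
      finally show ?thesis .
    qed
    ultimately have fX: "fro_sq (KV V Xbar - D0) \<le> 0" by simp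
    have cX: "KV V Xbar - D0 \<in> carrier_mat n n" by (rule minus_carrier_mat[OF D0c])
    have z: "KV V Xbar - D0 = 0\<^sub>m n n" by (rule fro_zero[OF cX fX])
    show ?thesis
    proof (rule eq_matI)
      fix a b assume "a < dim_row (KV V Xbar)" "b < dim_col (KV V Xbar)"
      then have ab: "a < n" "b < n" using Vc by (auto simp: KV_def lindK_def)
      have "(KV V Xbar - D0) $$ (a,b) = (0\<^sub>m n n :: real mat) $$ (a,b)" by (simp only: z)
      then have "(KV V Xbar - D0) $$ (a,b) = 0" using ab by simp
      then show "D0 $$ (a,b) = KV V Xbar $$ (a,b)" using ab D0c by simp
    qed (use D0c Vc in \<open>auto simp: KV_def lindK_def\<close>)
  qed
  have a_c: "D0 $$ (i,j) = 0 \<and> \<alpha> < 0" if a: "D0 = KV V Xbar"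
  proof -
    have kXb: "kvf V m (\<lambda>k l. Xbar $$ (k,l)) a b = D0 $$ (a,b)" if ab: "a < n" "b < n" for a b
      using KV_entry[OF Vc Xbc ab Xbs] a by simp
    have Fz: "(\<lambda>a b. 0::real) i j = (\<lambda>a b. 0::real) j i" by simp
    have base: "fro_sq (KV V Xbar - Dn) = 2*\<alpha>^2"
      using FRO[OF Xbc Xbs Fz, of 0] kXb by simp
    define F1 where "F1 a b = kvf V m (\<lambda>k l. (1\<^sub>m m :: real mat) $$ (k,l)) a b" for a b
    have F1s: "F1 i j = F1 j i" unfolding F1_def by (rule kvf_swap[symmetric])
    have F1ij: "F1 i j = 2" unfolding F1_def kvf_one using wsum w_def by simp
    define S1 where "S1 = (\<Sum>a<n. \<Sum>b<n. (F1 a b)^2)"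
    have S1: "S1 \<ge> 0" unfolding S1_def by (simp add: sum_nonneg)
    have "8 * \<alpha> \<le> 0"
    proof (rule alg_pos[OF S1])
      fix t :: real assume t: "t \<ge> 0"
      have Zp: "psd_mat m (Xbar + t \<cdot>\<^sub>m 1\<^sub>m m)" by (rule psd_comb[OF Xbar_min(1)[folded m_def] psd_one t])
      note Zc = psd_facts(1)[OF Zp] and Zs = psd_facts(2)[OF Zp]
      have "fro_sq (KV V (Xbar + t \<cdot>\<^sub>m 1\<^sub>m m) - Dn) = t^2 * S1 - 4*t*\<alpha>*F1 i j + 2*\<alpha>^2"
        unfolding S1_def
      proof (rule FRO[OF Zc Zs F1s])
        fix a b assume ab: "a < n" "b < n"
        have "kvf V m (\<lambda>k l. (Xbar + t \<cdot>\<^sub>m 1\<^sub>m m) $$ (k,l)) a b =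
            kvf V m (\<lambda>k l. Xbar $$ (k,l) + t * (1\<^sub>m m :: real mat) $$ (k,l)) a b"
          by (rule kvf_cong) (use Xbc in simp)
        also have "\<dots> = D0 $$ (a,b) + t * F1 a b" using kvf_lin kXb[OF ab] unfolding F1_def by simp
        finally show "kvf V m (\<lambda>k l. (Xbar + t \<cdot>\<^sub>m 1\<^sub>m m) $$ (k,l)) a b = D0 $$ (a,b) + t * F1 a b" .
      qed
      then show "t^2 * S1 - t * (8 * \<alpha>) \<ge> 0" using MIN[OF Zp] base F1ij by simp
    qed
    then have aneg: "\<alpha> < 0" using alpha by simp
    define S0 where "S0 = (\<Sum>a<n. \<Sum>b<n. (D0 $$ (a,b))^2)"
    have S0: "S0 \<ge> 0" unfolding S0_def by (simp add: sum_nonneg)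
    have key: "t^2 * S0 - t * (4 * \<alpha> * D0 $$ (i,j)) \<ge> 0" if t: "t \<ge> -1" for t
    proof -
      have Zp: "psd_mat m ((1 + t) \<cdot>\<^sub>m Xbar)" by (rule psd_smult[OF Xbar_min(1)[folded m_def]]) (use t in simp)
      note Zc = psd_facts(1)[OF Zp] and Zs = psd_facts(2)[OF Zp]
      have "fro_sq (KV V ((1 + t) \<cdot>\<^sub>m Xbar) - Dn) = t^2 * S0 - 4*t*\<alpha>*D0 $$ (i,j) + 2*\<alpha>^2"
        unfolding S0_def
      proof (rule FRO[OF Zc Zs D0s[OF ijne(2) ij(2)]])
        fix a b assume ab: "a < n" "b < n"
        have "kvf V m (\<lambda>k l. ((1 + t) \<cdot>\<^sub>m Xbar) $$ (k,l)) a b =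
            kvf V m (\<lambda>k l. (1 + t) * Xbar $$ (k,l)) a b"
          by (rule kvf_cong) (use Xbc in simp)
        also have "\<dots> = (1 + t) * kvf V m (\<lambda>k l. Xbar $$ (k,l)) a b"
          by (rule kvf_scale)
        also have "\<dots> = D0 $$ (a,b) + t * D0 $$ (a,b)" using kXb[OF ab] by (simp add: algebra_simps)
        finally show "kvf V m (\<lambda>k l. ((1 + t) \<cdot>\<^sub>m Xbar) $$ (k,l)) a b = D0 $$ (a,b) + t * D0 $$ (a,b)" .
      qed
      then show ?thesis using MIN[OF Zp] base by simp
    qed
    have "4 * \<alpha> * D0 $$ (i,j) \<le> 0" by (rule alg_pos[OF S0]) (use key in simp)
    moreover have "4 * \<alpha> * D0 $$ (i,j) \<ge> 0" by (rule alg_neg[OF S0]) (use key in simp)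
    ultimately have "\<alpha> * D0 $$ (i,j) = 0" by simp
    then show ?thesis using alpha aneg by simp
  qed
  have pinv_psd: "psd_mat m (KV_pinv V D0)" using pinv X0psd by simp
  show ?thesis
    unfolding m_def[symmetric]
    using Yeq alpha Ynz Ypsd pinv_psd trace c_a a_c by auto
qed

end
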